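(* Let $\alpha\ge1.5$ and, for $y\ge\sqrt3/2$, $$g_\alpha(y)=\sum_{k,l\in\mathbb{Z}}\exp\!\Big(-\tfrac{\pi\alpha}{y}\big(k^2+kl+(\tfrac14+y^2)l^2\big)\Big)\cos\big(2\pi(ka_2(y)-la_1(y))\big),$$ with $a_1(y)=\tfrac14+\tfrac1{16y^2}$, $a_2(y)=\tfrac12-\tfrac1{8y^2}$. Then $g_\alpha$ attains its maximum over $[\sqrt3/2,\infty)$ in the interval $\big[\tfrac{\sqrt3}2,\tfrac{\sqrt3}2+\tfrac1{4\sqrt\alpha}\big]$. *)

theory Defs
  imports "HOL-Analysis.Analysis"
begin

definition a1 :: "real \<Rightarrow> real" where
  "a1 y = 1/4 + 1/(16 * y^2)"

definition a2 :: "real \<Rightarrow> real" where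
  "a2 y = 1/2 - 1/(8 * y^2)"

definition g :: "real \<Rightarrow> real \<Rightarrow> real" where
  "g \<alpha> y = (\<Sum>\<^sub>\<infinity>(k,l)\<in>(UNIV :: (int \<times> int) set).
      exp (- (pi * \<alpha> / y) * (real_of_int k ^ 2 + real_of_int k * real_of_int l
                               + (1/4 + y^2) * real_of_int l ^ 2))
      * cos (2 * pi * (real_of_int k * a2 y - real_of_int l * a1 y)))"

end

theory Submission
  imports Defs
begin

lemma nat_infsum_eq_suminf:
  fixes f :: "nat \<Rightarrow> real"
  assumes "f summable_on UNIV"
  shows "infsum f UNIV = suminf f" "summable f"
proof -
  have "(f has_sum infsum f UNIV) UNIV" using assms by (simp add: has_sum_infsum)
  hence "f sums infsum f UNIV" by (rule has_sum_imp_sums)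
  thus "infsum f UNIV = suminf f" "summable f" by (auto simp: sums_iff)
qed

lemma int_infsum_split:
  fixes f :: "int \<Rightarrow> real"
  assumes S: "f summable_on UNIV"
  shows "summable (\<lambda>n. f (int n + 1))" "summable (\<lambda>n. f (- int n - 1))"
    "infsum f UNIV = f 0 + (\<Sum>n. f (int n + 1)) + (\<Sum>n. f (- int n - 1))"
proof -
  define A where "A = range (\<lambda>n::nat. int n + 1)"
  define B where "B = range (\<lambda>n::nat. - int n - 1)"
  have injA: "inj (\<lambda>n::nat. int n + 1)" by (auto simp: inj_def)
  have injB: "inj (\<lambda>n::nat. - int n - 1)" by (auto simp: inj_def)
  have SA: "f summable_on A" using S by (rule summable_on_subset_banach) auto
  have SB: "f summable_on B" using S by (rule summable_on_subset_banach) auto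
  have SA': "(f \<circ> (\<lambda>n::nat. int n + 1)) summable_on UNIV"
    using SA unfolding A_def by (simp add: summable_on_reindex[OF injA])
  have SB': "(f \<circ> (\<lambda>n::nat. - int n - 1)) summable_on UNIV"
    using SB unfolding B_def by (simp add: summable_on_reindex[OF injB])
  have IA: "infsum f A = (\<Sum>n. f (int n + 1))"
    using nat_infsum_eq_suminf[OF SA'] unfolding A_def by (simp add: infsum_reindex[OF injA] o_def)
  have IB: "infsum f B = (\<Sum>n. f (- int n - 1))"
    using nat_infsum_eq_suminf[OF SB'] unfolding B_def by (simp add: infsum_reindex[OF injB] o_def)
  show "summable (\<lambda>n. f (int n + 1))" using nat_infsum_eq_suminf(2)[OF SA'] by (simp add: o_def)
  show "summable (\<lambda>n. f (- int n - 1))" using nat_infsum_eq_suminf(2)[OF SB'] by (simp add: o_def)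
  have U: "UNIV = {0} \<union> (A \<union> B)"
  proof (auto simp: A_def B_def)
    fix x :: int assume "x \<noteq> 0" "x \<notin> range (\<lambda>n. - int n - 1)"
    hence "x > 0"
    proof (rule_tac ccontr)
      assume "\<not> 0 < x" "x \<noteq> 0" "x \<notin> range (\<lambda>n. - int n - 1)"
      hence "x = - int (nat (-x-1)) - 1" by simp
      thus False using \<open>x \<notin> range (\<lambda>n. - int n - 1)\<close> by (metis rangeI)
    qed
    thus "x \<in> range (\<lambda>n. int n + 1)" by (intro image_eqI[of _ _ "nat (x - 1)"]) auto
  qed
  have D: "A \<inter> B = {}" by (auto simp: A_def B_def)
  have "infsum f UNIV = infsum f {0} + infsum f (A \<union> B)"
    unfolding U by (rule infsum_Un_disjoint) (auto simp: A_def B_def intro!: summable_on_Un_disjoint[OF SA SB D, unfolded A_def B_def])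
  also have "infsum f (A \<union> B) = infsum f A + infsum f B" by (rule infsum_Un_disjoint[OF SA SB D])
  finally show "infsum f UNIV = f 0 + (\<Sum>n. f (int n + 1)) + (\<Sum>n. f (- int n - 1))"
    using IA IB by simp
qed

lemma int_summable:
  fixes f :: "int \<Rightarrow> real"
  assumes "summable (\<lambda>n. norm (f (int n)))" "summable (\<lambda>n. norm (f (- int n)))"
  shows "f summable_on UNIV"
proof -
  define A where "A = range (\<lambda>n::nat. int n)"
  define B where "B = range (\<lambda>n::nat. - int n - 1)"
  have injA: "inj (\<lambda>n::nat. int n)" by (auto simp: inj_def)
  have injB: "inj (\<lambda>n::nat. - int n - 1)" by (auto simp: inj_def)
  have s2': "summable (\<lambda>n. norm (f (- int (n + 1))))"
    using summable_ignore_initial_segment[OF assms(2), of 1] by simp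
  have eq: "(\<lambda>n. norm (f (- int n - 1))) = (\<lambda>n. norm (f (- int (n + 1))))"
    by (rule ext, rule arg_cong[where f="\<lambda>x. norm (f x)"], simp)
  have s2: "summable (\<lambda>n. norm (f (- int n - 1)))" unfolding eq by (rule s2')
  have "(f \<circ> (\<lambda>n::nat. int n)) summable_on UNIV"
    by (rule norm_summable_imp_summable_on) (use assms(1) in \<open>simp add: o_def\<close>)
  hence SA: "f summable_on A" unfolding A_def by (simp add: summable_on_reindex[OF injA])
  have "(f \<circ> (\<lambda>n::nat. - int n - 1)) summable_on UNIV"
    by (rule norm_summable_imp_summable_on) (use s2 in \<open>simp add: o_def\<close>)
  hence SB: "f summable_on B" unfolding B_def by (simp add: summable_on_reindex[OF injB])
  have U: "UNIV = A \<union> B"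
  proof (auto simp: A_def B_def)
    fix x :: int assume "x \<notin> range (\<lambda>n. - int n - 1)"
    hence "x \<ge> 0"
    proof (rule_tac ccontr)
      assume "\<not> 0 \<le> x" "x \<notin> range (\<lambda>n. - int n - 1)"
      hence "x = - int (nat (-x-1)) - 1" by simp
      thus False using \<open>x \<notin> range (\<lambda>n. - int n - 1)\<close> by (metis rangeI)
    qed
    thus "x \<in> range int" by (metis nonneg_int_cases rangeI)
  qed
  show ?thesis unfolding U by (rule summable_on_Un_disjoint[OF SA SB]) (auto simp: A_def B_def)
qed


lemma geo_bound:
  fixes f :: "nat \<Rightarrow> real"
  assumes "\<And>n. \<bar>f n\<bar> \<le> C * q ^ n" "0 \<le> q" "q < 1"
  shows "summable f" "\<bar>suminf f\<bar> \<le> C / (1 - q)" "suminf f \<le> C / (1 - q)" "- (C / (1 - q)) \<le> suminf f"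
proof -
  have sg: "summable (\<lambda>n. C * q ^ n)" using assms by (intro summable_mult summable_geometric) auto
  show sf: "summable f" by (rule summable_comparison_test'[OF sg]) (use assms(1) in auto)
  have sa: "summable (\<lambda>n. \<bar>f n\<bar>)" by (rule summable_comparison_test'[OF sg]) (use assms(1) in auto)
  have "\<bar>suminf f\<bar> \<le> (\<Sum>n. \<bar>f n\<bar>)" using summable_rabs[OF sa] by simp
  also have "\<dots> \<le> (\<Sum>n. C * q ^ n)" by (rule suminf_le[OF _ sa sg]) (use assms(1) in auto)
  also have "\<dots> = C / (1 - q)" using assms by (simp add: suminf_mult suminf_geometric divide_simps)
  finally show "\<bar>suminf f\<bar> \<le> C / (1 - q)" .
  thus "suminf f \<le> C / (1 - q)" "- (C / (1 - q)) \<le> suminf f" by auto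
qed

lemma exp_nat_sq_le:
  fixes a :: real assumes "a \<ge> 0"
  shows "exp (- a * real n ^ 2) \<le> exp (- a) ^ n"
proof -
  have "real n \<le> real n ^ 2" by (cases n) (auto simp: power2_eq_square)
  hence "- a * real n ^ 2 \<le> - a * real n" using assms by (intro mult_left_mono_neg) auto
  thus ?thesis by (simp add: exp_of_nat_mult[symmetric] mult.commute)
qed

lemma gauss_summable:
  fixes a :: real assumes "a > 0"
  shows "(\<lambda>k::int. exp (- a * real_of_int k ^ 2)) summable_on UNIV"
proof (rule int_summable)
  have "summable (\<lambda>n::nat. exp (- a) ^ n)" using assms by (intro summable_geometric) auto
  hence s: "summable (\<lambda>n::nat. exp (- a * real n ^ 2))"
    by (rule summable_comparison_test'[where N=0]) (use exp_nat_sq_le assms in auto)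
  show "summable (\<lambda>n. norm (exp (- a * real_of_int (int n) ^ 2)))" using s by simp
  show "summable (\<lambda>n. norm (exp (- a * real_of_int (- int n) ^ 2)))" using s by simp
qed

lemma gauss_bound:
  fixes a :: real assumes "a > 0"
  shows "(\<Sum>\<^sub>\<infinity>k::int. exp (- a * real_of_int k ^ 2)) \<le> (2 + a) / a"
proof -
  let ?f = "\<lambda>k::int. exp (- a * real_of_int k ^ 2)"
  note sp = int_infsum_split[OF gauss_summable[OF assms]]
  define q where "q = exp (- a)"
  have q0: "0 \<le> q" and q1: "q < 1" using assms by (auto simp: q_def)
  have b: "\<bar>?f (int n + 1)\<bar> \<le> q * q ^ n" for n
  proof -
    have "?f (int n + 1) = exp (- a * real (Suc n) ^ 2)" by simp
    also have "\<dots> \<le> q ^ Suc n" unfolding q_def by (rule exp_nat_sq_le) (use assms in auto)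
    finally show ?thesis by simp
  qed
  have b2: "\<bar>?f (- int n - 1)\<bar> \<le> q * q ^ n" for n
    using b[of n] by (simp add: power2_eq_square algebra_simps)
  have "infsum ?f UNIV \<le> 1 + q / (1 - q) + q / (1 - q)"
    using sp(3) geo_bound(3)[OF b q0 q1] geo_bound(3)[OF b2 q0 q1] by simp
  also have "\<dots> = (1 + q) / (1 - q)" using q1 by (simp add: field_simps)
  also have "\<dots> \<le> (2 + a) / a"
  proof -
    have "1 + a \<le> exp a" by simp
    hence qa: "q * (1 + a) \<le> 1" unfolding q_def using assms by (simp add: exp_minus field_simps)
    show ?thesis using q1 q0 assms qa by (simp add: field_simps)
  qed
  finally show ?thesis .
qed

lemma product_summable:
  fixes m1 m2 :: "int \<Rightarrow> real"
  assumes "m1 summable_on UNIV" "m2 summable_on UNIV" "\<And>k. m1 k \<ge> 0" "\<And>l. m2 l \<ge> 0"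
  shows "(\<lambda>(k,l). m1 k * m2 l) summable_on UNIV"
proof -
  have "(\<lambda>(k,l). m1 k * m2 l) summable_on Sigma UNIV (\<lambda>_. UNIV)"
  proof (rule summable_on_SigmaI[where g = "\<lambda>k. m1 k * infsum m2 UNIV"])
    show "((\<lambda>l. (\<lambda>(k,l). m1 k * m2 l) (k, l)) has_sum m1 k * infsum m2 UNIV) UNIV" for k
      using has_sum_cmult_right[OF has_sum_infsum[OF assms(2)], of "m1 k"] by simp
    show "(\<lambda>k. m1 k * infsum m2 UNIV) summable_on UNIV"
      using summable_on_cmult_left[OF assms(1)] by simp
    show "0 \<le> (\<lambda>(k,l). m1 k * m2 l) (k, l)" for k l using assms by simp
  qed
  thus ?thesis by simp
qed

lemma summable_by_major:
  fixes f M :: "'a \<Rightarrow> real"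
  assumes "M summable_on A" "\<And>x. x \<in> A \<Longrightarrow> \<bar>f x\<bar> \<le> M x"
  shows "f summable_on A"
proof -
  have "(\<lambda>x. \<bar>f x\<bar>) summable_on A"
    by (rule summable_on_comparison_test[OF assms(1)]) (use assms(2) in auto)
  thus ?thesis by (subst summable_on_iff_abs_summable_on_real) simp
qed

lemma infsum_by_major:
  fixes f M :: "'a \<Rightarrow> real"
  assumes "M summable_on A" "\<And>x. x \<in> A \<Longrightarrow> \<bar>f x\<bar> \<le> M x"
  shows "\<bar>infsum f A\<bar> \<le> infsum M A"
proof -
  have sa: "(\<lambda>x. \<bar>f x\<bar>) summable_on A"
    by (rule summable_on_comparison_test[OF assms(1)]) (use assms(2) in auto)
  have "\<bar>infsum f A\<bar> \<le> infsum (\<lambda>x. \<bar>f x\<bar>) A"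
    using norm_infsum_bound[of f A] sa by simp
  also have "\<dots> \<le> infsum M A" by (rule infsum_mono[OF sa assms(1)]) (use assms(2) in auto)
  finally show ?thesis .
qed


definition Tq :: "real \<Rightarrow> real \<Rightarrow> int \<times> int \<Rightarrow> real" where
 "Tq \<alpha> y = (\<lambda>(k,l). exp (- (pi * \<alpha> / y) * (real_of_int k ^ 2 + real_of_int k * real_of_int l
                               + (1/4 + y^2) * real_of_int l ^ 2))
      * cos (2 * pi * (real_of_int k * a2 y - real_of_int l * a1 y)))"

lemma g_Tq: "g \<alpha> y = infsum (Tq \<alpha> y) UNIV"
  unfolding g_def Tq_def by simp

definition Rw :: "real \<Rightarrow> real \<Rightarrow> int \<Rightarrow> real" where
  "Rw \<alpha> y l = (\<Sum>\<^sub>\<infinity>k. Tq \<alpha> y (k, l))"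

lemma Tq_major:
  assumes "\<alpha> > 0" "y > 0" "y^2 \<ge> 3/4"
  shows "\<bar>Tq \<alpha> y (k,l)\<bar> \<le> exp (- (pi * \<alpha> / (4*y)) * real_of_int k ^ 2) * exp (- (pi * \<alpha> / y * (y^2 - 1/12)) * real_of_int l ^ 2)"
proof -
  define K where "K = real_of_int k"
  define L where "L = real_of_int l"
  have t: "pi * \<alpha> / y > 0" using assms by simp
  have Qge: "K^2 + K*L + (1/4 + y^2) * L^2 \<ge> K^2/4 + (y^2 - 1/12) * L^2"
  proof -
    have "K^2 + K*L + (1/4 + y^2) * L^2 - (K^2/4 + (y^2 - 1/12) * L^2) = 3/4 * (K + 2/3*L)^2"
      by (simp add: power2_eq_square algebra_simps)
    moreover have "0 \<le> 3/4 * (K + 2/3*L)^2" by simp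
    ultimately show ?thesis by linarith
  qed
  have "\<bar>Tq \<alpha> y (k,l)\<bar> \<le> exp (- (pi * \<alpha> / y) * (K^2 + K*L + (1/4 + y^2) * L^2))"
    unfolding Tq_def K_def L_def by (simp add: abs_mult)
  also have "\<dots> \<le> exp (- (pi * \<alpha> / y) * (K^2/4 + (y^2 - 1/12) * L^2))"
  proof -
    have "pi * \<alpha> / y * (K^2/4 + (y^2 - 1/12) * L^2) \<le> pi * \<alpha> / y * (K^2 + K*L + (1/4 + y^2) * L^2)"
      by (rule mult_left_mono[OF Qge]) (use t in simp)
    thus ?thesis by simp
  qed
  also have "\<dots> = exp (- (pi * \<alpha> / (4*y)) * K ^ 2) * exp (- (pi * \<alpha> / y * (y^2 - 1/12)) * L ^ 2)"
    by (simp add: exp_add[symmetric] algebra_simps)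
  finally show ?thesis unfolding K_def L_def .
qed

locale setting =
  fixes \<alpha> y :: real
  assumes al: "\<alpha> > 0" and y: "y > 0" "y^2 \<ge> 3/4"
begin

definition "a = pi * \<alpha> / (4*y)"
definition "b = pi * \<alpha> / y * (y^2 - 1/12)"
definition "Gs = (\<Sum>\<^sub>\<infinity>k::int. exp (- a * real_of_int k ^ 2))"

lemma a_pos: "a > 0" using al y by (simp add: a_def)
lemma b_pos: "b > 0" using al y by (simp add: b_def)

lemma Gs_bound: "Gs \<le> (2 + a) / a" unfolding Gs_def by (rule gauss_bound[OF a_pos])
lemma Gs_nonneg: "Gs \<ge> 0" unfolding Gs_def by (rule infsum_nonneg) auto

lemma major: "\<bar>Tq \<alpha> y (k,l)\<bar> \<le> exp (- a * real_of_int k ^ 2) * exp (- b * real_of_int l ^ 2)"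
  using Tq_major[OF al y] unfolding a_def b_def by simp

lemma Tq_summable: "Tq \<alpha> y summable_on UNIV"
proof (rule summable_by_major[OF product_summable[OF gauss_summable[OF a_pos] gauss_summable[OF b_pos]]])
  show "\<bar>Tq \<alpha> y x\<bar> \<le> (\<lambda>(k,l). exp (- a * real_of_int k ^ 2) * exp (- b * real_of_int l ^ 2)) x" for x
    using major by (cases x) simp
qed auto

lemma row_summable: "(\<lambda>k. Tq \<alpha> y (k,l)) summable_on UNIV"
  by (rule summable_by_major[OF summable_on_cmult_left[OF gauss_summable[OF a_pos]]])
     (rule major)

lemma row_bound: "\<bar>Rw \<alpha> y l\<bar> \<le> Gs * exp (- b * real_of_int l ^ 2)"
proof -
  have "\<bar>Rw \<alpha> y l\<bar> \<le> (\<Sum>\<^sub>\<infinity>k. exp (- a * real_of_int k ^ 2) * exp (- b * real_of_int l ^ 2))"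
    unfolding Rw_def
    by (rule infsum_by_major[OF summable_on_cmult_left[OF gauss_summable[OF a_pos]]]) (rule major)
  also have "\<dots> = Gs * exp (- b * real_of_int l ^ 2)"
    unfolding Gs_def by (rule infsum_cmult_left) (rule gauss_summable[OF a_pos])
  finally show ?thesis .
qed

lemma Rw_summable: "Rw \<alpha> y summable_on UNIV"
  by (rule summable_by_major[OF summable_on_cmult_right[OF gauss_summable[OF b_pos]]])
     (rule row_bound)

lemma g_rows: "g \<alpha> y = infsum (Rw \<alpha> y) UNIV"
proof -
  have s: "(\<lambda>(k,l). Tq \<alpha> y (k,l)) summable_on (UNIV \<times> UNIV)" using Tq_summable by simp
  have "g \<alpha> y = infsum (\<lambda>(k,l). Tq \<alpha> y (k,l)) (Sigma UNIV (\<lambda>_. UNIV))" by (simp add: g_Tq)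
  also have "\<dots> = (\<Sum>\<^sub>\<infinity>k. \<Sum>\<^sub>\<infinity>l. Tq \<alpha> y (k,l))"
    by (rule infsum_Sigma'_banach[symmetric]) (use s in simp)
  also have "\<dots> = (\<Sum>\<^sub>\<infinity>l. \<Sum>\<^sub>\<infinity>k. Tq \<alpha> y (k,l))"
    by (rule infsum_swap_banach) (use s in simp_all)
  finally show ?thesis unfolding Rw_def by (simp add: fun_eq_iff)
qed

lemma Tq_sym: "Tq \<alpha> y (k, -l) = Tq \<alpha> y (-k, l)"
proof -
  have c: "cos (2 * pi * (u * a2 y + v * a1 y)) = cos (2 * pi * (- u * a2 y - v * a1 y))" for u v
    by (subst cos_minus[symmetric]) (simp add: algebra_simps)
  show ?thesis unfolding Tq_def using c[of "real_of_int k" "real_of_int l"] by (simp add: algebra_simps)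
qed

lemma Rw_sym: "Rw \<alpha> y (-l) = Rw \<alpha> y l"
proof -
  have "Rw \<alpha> y (-l) = (\<Sum>\<^sub>\<infinity>k. Tq \<alpha> y (-k, l))" unfolding Rw_def by (simp add: Tq_sym)
  also have "\<dots> = infsum ((\<lambda>k. Tq \<alpha> y (k, l)) \<circ> uminus) UNIV" by (simp add: o_def)
  also have "\<dots> = infsum (\<lambda>k. Tq \<alpha> y (k, l)) (uminus ` UNIV)"
    by (rule infsum_reindex[symmetric]) auto
  also have "uminus ` (UNIV::int set) = UNIV" by (simp add: surj_def)
  finally show ?thesis unfolding Rw_def by simp
qed

lemma g_decomp:
  "g \<alpha> y = Rw \<alpha> y 0 + 2 * Rw \<alpha> y 1 + 2 * (\<Sum>n. Rw \<alpha> y (int n + 2))"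
  "\<bar>\<Sum>n. Rw \<alpha> y (int n + 2)\<bar> \<le> Gs * exp (- 4 * b) / (1 - exp (- b))"
proof -
  note sp = int_infsum_split[OF Rw_summable]
  have neg: "(\<lambda>n. Rw \<alpha> y (- int n - 1)) = (\<lambda>n. Rw \<alpha> y (int n + 1))"
  proof (rule ext)
    fix n :: nat
    have "- int n - 1 = - (int n + 1)" by simp
    thus "Rw \<alpha> y (- int n - 1) = Rw \<alpha> y (int n + 1)" using Rw_sym[of "int n + 1"] by (simp only:)
  qed
  have bd: "\<bar>Rw \<alpha> y (int n + 2)\<bar> \<le> (Gs * exp (- 4 * b)) * exp (- b) ^ n" for n
  proof -
    have "real_of_int (int n + 2) ^ 2 \<ge> 4 + real n"
      by (simp add: power2_eq_square algebra_simps)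
    hence "b * (4 + real n) \<le> b * real_of_int (int n + 2) ^ 2"
      using b_pos by (intro mult_left_mono) auto
    hence "- b * real_of_int (int n + 2) ^ 2 \<le> - 4 * b + real n * (- b)"
      by (simp add: algebra_simps)
    hence "exp (- b * real_of_int (int n + 2) ^ 2) \<le> exp (- 4 * b) * exp (- b) ^ n"
      by (simp add: exp_add[symmetric] exp_of_nat_mult[symmetric])
    hence "Gs * exp (- b * real_of_int (int n + 2) ^ 2) \<le> Gs * (exp (- 4 * b) * exp (- b) ^ n)"
      using Gs_nonneg by (rule mult_left_mono)
    thus ?thesis using row_bound[of "int n + 2"] by (simp add: mult.assoc)
  qed
  have eb: "exp (- b) < 1" "0 \<le> exp (- b)" using b_pos by auto
  note gb = geo_bound[OF bd eb(2) eb(1)]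
  have s1: "summable (\<lambda>n. Rw \<alpha> y (int n + 1))" using sp(1) .
  have "(\<Sum>n. Rw \<alpha> y (int n + 1)) = Rw \<alpha> y 1 + (\<Sum>n. Rw \<alpha> y (int (Suc n) + 1))"
    using suminf_split_head[OF s1] by simp
  also have "(\<lambda>n. Rw \<alpha> y (int (Suc n) + 1)) = (\<lambda>n. Rw \<alpha> y (int n + 2))" by (simp add: add.commute)
  finally have h: "(\<Sum>n. Rw \<alpha> y (int n + 1)) = Rw \<alpha> y 1 + (\<Sum>n. Rw \<alpha> y (int n + 2))" .
  show "g \<alpha> y = Rw \<alpha> y 0 + 2 * Rw \<alpha> y 1 + 2 * (\<Sum>n. Rw \<alpha> y (int n + 2))"
  proof -
    have "g \<alpha> y = Rw \<alpha> y 0 + (\<Sum>n. Rw \<alpha> y (int n + 1)) + (\<Sum>n. Rw \<alpha> y (- int n - 1))"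
      using sp(3) g_rows by (simp only:)
    also have "\<dots> = Rw \<alpha> y 0 + 2 * (\<Sum>n. Rw \<alpha> y (int n + 1))" by (simp only: neg)
    finally show ?thesis by (simp only: h distrib_left add.assoc)
  qed
  show "\<bar>\<Sum>n. Rw \<alpha> y (int n + 2)\<bar> \<le> Gs * exp (- 4 * b) / (1 - exp (- b))" using gb(2) .
qed

end


lemma nat_le_sq: "real n \<le> real n * real n"
proof -
  have "n \<le> n * n" by (rule le_square)
  thus ?thesis by (metis of_nat_le_iff of_nat_mult)
qed

lemma exp_lin_pow: fixes s :: real shows "exp (- s * (real m + real k * real n)) = exp (- s) ^ m * (exp (- s) ^ k) ^ n"
proof -
  have "exp (- s * (real m + real k * real n)) = exp (real m * (-s)) * exp (real n * (real k * (-s)))"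
    by (subst exp_add[symmetric]) (simp add: algebra_simps)
  also have "\<dots> = exp (- s) ^ m * (exp (- s) ^ k) ^ n" by (simp only: exp_of_nat_mult)
  finally show ?thesis .
qed

lemma exp_mono_neg: fixes s :: real shows "s \<ge> 0 \<Longrightarrow> A \<ge> B \<Longrightarrow> exp (- s * A) \<le> exp (- s * B)"
  using mult_left_mono[of B A s] by simp

context setting begin

definition "s = pi * \<alpha> / y"
definition "x = exp (- s)"

lemma s_pos: "s > 0" using al y by (simp add: s_def)
lemma x_pos: "x > 0" and x_lt1: "x < 1" using s_pos by (auto simp: x_def)

lemma Tq0: "Tq \<alpha> y (k, 0) = exp (- s * real_of_int k ^ 2) * cos (2 * pi * real_of_int k * a2 y)"
  unfolding Tq_def s_def by (simp add: algebra_simps)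

lemma Tq1: "Tq \<alpha> y (k, 1) = exp (- s * ((real_of_int k + 1/2) ^ 2 + y^2)) * cos (2 * pi * (real_of_int k * a2 y - a1 y))"
  unfolding Tq_def s_def by (simp add: algebra_simps power2_eq_square)

lemma R0_split: "Rw \<alpha> y 0 = 1 + 2 * (\<Sum>n. Tq \<alpha> y (int n + 1, 0))"
  "summable (\<lambda>n. Tq \<alpha> y (int n + 1, 0))"
proof -
  note sp = int_infsum_split[OF row_summable[of 0]]
  have e: "Tq \<alpha> y (- int n - 1, 0) = Tq \<alpha> y (int n + 1, 0)" for n
    using Tq_sym[of "- int n - 1" 0] by (simp add: add.commute)
  show "Rw \<alpha> y 0 = 1 + 2 * (\<Sum>n. Tq \<alpha> y (int n + 1, 0))"
    using sp(3) unfolding Rw_def e by (simp add: Tq0)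
  show "summable (\<lambda>n. Tq \<alpha> y (int n + 1, 0))" using sp(1) .
qed

lemma R0_approx: "\<bar>Rw \<alpha> y 0 - (1 + 2 * x * cos (2 * pi * a2 y))\<bar> \<le> 2 * (x^4 / (1 - x^5))"
proof -
  note sp = R0_split
  have h: "(\<Sum>n. Tq \<alpha> y (int n + 1, 0)) = Tq \<alpha> y (1, 0) + (\<Sum>n. Tq \<alpha> y (int (Suc n) + 1, 0))"
    using suminf_split_head[OF sp(2)] by simp
  have t1: "Tq \<alpha> y (1, 0) = x * cos (2 * pi * a2 y)" by (simp add: Tq0 x_def)
  have bd: "\<bar>Tq \<alpha> y (int (Suc n) + 1, 0)\<bar> \<le> x^4 * (x^5)^n" for n
  proof -
    have "\<bar>Tq \<alpha> y (int (Suc n) + 1, 0)\<bar> \<le> exp (- s * real_of_int (int (Suc n) + 1) ^ 2)"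
      unfolding Tq0 by (simp add: abs_mult)
    also have "\<dots> \<le> exp (- s * (real 4 + real 5 * real n))"
      by (rule exp_mono_neg) (use s_pos nat_le_sq[of n] in \<open>auto simp: power2_eq_square algebra_simps\<close>)
    also have "\<dots> = x^4 * (x^5)^n" unfolding x_def by (rule exp_lin_pow)
    finally show ?thesis .
  qed
  have x5: "0 \<le> x^5" "x^5 < 1" using x_pos x_lt1 by (auto simp: power_less_one_iff)
  note gb = geo_bound(2)[OF bd x5]
  show ?thesis using sp(1) h t1 gb by (simp add: abs_le_iff)
qed

lemma R1_approx: "\<bar>Rw \<alpha> y 1 - (Tq \<alpha> y (0,1) + Tq \<alpha> y (-1,1))\<bar> \<le> 2 * (exp (- s * (y^2 + 9/4)) / (1 - x^3))"
proof -
  note sp = int_infsum_split[OF row_summable[of 1]]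
  have h: "(\<Sum>n. Tq \<alpha> y (- int n - 1, 1)) = Tq \<alpha> y (-1, 1) + (\<Sum>n. Tq \<alpha> y (- int (Suc n) - 1, 1))"
    using suminf_split_head[OF sp(2)] by simp
  let ?E = "exp (- s * (y^2 + 9/4))"
  have key: "exp (- s * ((u + 1/2) ^ 2 + y^2)) \<le> ?E * (x^3)^n" if "\<bar>u + 1/2\<bar> \<ge> real n + 3/2" for u :: real and n :: nat
  proof -
    have "(real n + 3/2)^2 \<le> \<bar>u + 1/2\<bar>^2" by (rule power_mono[OF that]) simp
    hence "(u + 1/2)^2 \<ge> (real n + 3/2)^2" by simp
    also have "(real n + 3/2)^2 \<ge> 9/4 + 3 * real n" by (simp add: power2_eq_square algebra_simps)
    finally have "(u + 1/2) ^ 2 + y^2 \<ge> (y^2 + 9/4) + real 3 * real n" by simp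
    hence "exp (- s * ((u + 1/2) ^ 2 + y^2)) \<le> exp (- s * ((y^2 + 9/4) + real 3 * real n))"
      by (rule exp_mono_neg[OF less_imp_le[OF s_pos]])
    also have "\<dots> = ?E * exp (real n * (real 3 * (- s)))"
      by (subst exp_add[symmetric]) (simp add: algebra_simps)
    also have "\<dots> = ?E * (x^3)^n" by (simp only: exp_of_nat_mult x_def)
    finally show ?thesis .
  qed
  have b1: "\<bar>Tq \<alpha> y (int n + 1, 1)\<bar> \<le> ?E * (x^3)^n" for n
  proof -
    have "\<bar>Tq \<alpha> y (int n + 1, 1)\<bar> \<le> exp (- s * ((real_of_int (int n + 1) + 1/2) ^ 2 + y^2))"
      unfolding Tq1 by (simp add: abs_mult)
    also have "\<dots> \<le> ?E * (x^3)^n" by (rule key) simp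
    finally show ?thesis .
  qed
  have b2: "\<bar>Tq \<alpha> y (- int (Suc n) - 1, 1)\<bar> \<le> ?E * (x^3)^n" for n
  proof -
    have "\<bar>Tq \<alpha> y (- int (Suc n) - 1, 1)\<bar> \<le> exp (- s * ((real_of_int (- int (Suc n) - 1) + 1/2) ^ 2 + y^2))"
      unfolding Tq1 by (simp add: abs_mult)
    also have "\<dots> \<le> ?E * (x^3)^n" by (rule key) simp
    finally show ?thesis .
  qed
  have x3: "0 \<le> x^3" "x^3 < 1" using x_pos x_lt1 by (auto simp: power_less_one_iff)
  note g1 = geo_bound(2)[OF b1 x3]
  note g2 = geo_bound(2)[OF b2 x3]
  show ?thesis using sp(3) h g1 g2 unfolding Rw_def by (simp add: abs_le_iff)
qed

lemma cos_a2: "cos (2 * pi * a2 y) = - cos (pi / (4 * y^2))"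
proof -
  have "2 * pi * a2 y = pi - pi / (4 * y^2)" using y by (simp add: a2_def field_simps)
  thus ?thesis by simp
qed

lemma cos_a1: "cos (2 * pi * a1 y) = - sin (pi / (8 * y^2))"
proof -
  have "2 * pi * a1 y = pi/2 + pi / (8 * y^2)" using y by (simp add: a1_def field_simps)
  thus ?thesis by (simp add: cos_add)
qed

lemma cos_a12: "cos (2 * pi * (a1 y + a2 y)) = - sin (pi / (8 * y^2))"
proof -
  have "2 * pi * (a1 y + a2 y) = 3/2*pi - pi / (8 * y^2)" using y by (simp add: a1_def a2_def field_simps)
  thus ?thesis using cos_3over2_pi sin_3over2_pi by (simp add: cos_diff)
qed

lemma special1: "Tq \<alpha> y (0,1) + Tq \<alpha> y (-1,1) = - 2 * exp (- s * (1/4 + y^2)) * sin (pi / (8 * y^2))"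
proof -
  have "Tq \<alpha> y (0,1) = exp (- s * (1/4 + y^2)) * cos (2 * pi * a1 y)"
    unfolding Tq1 by (simp add: power2_eq_square)
  moreover have "Tq \<alpha> y (-1,1) = exp (- s * (1/4 + y^2)) * cos (2 * pi * (a1 y + a2 y))"
  proof -
    have "cos (2 * pi * (- a2 y - a1 y)) = cos (2 * pi * (a1 y + a2 y))"
      by (subst cos_minus[symmetric]) (simp add: algebra_simps)
    thus ?thesis unfolding Tq1 by (simp add: power2_eq_square)
  qed
  ultimately show ?thesis using cos_a1 cos_a12 by simp
qed

end

context setting begin

lemma sin_nonneg: "sin (pi / (8 * y^2)) \<ge> 0"
proof (rule sin_ge_zero)
  show "0 \<le> pi / (8 * y^2)" by simp
  have "8 * y^2 \<ge> 1" using y by simp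
  thus "pi / (8 * y^2) \<le> pi" by (simp add: divide_le_eq)
qed

lemma g_upper: "g \<alpha> y \<le> 1 - 2*x*cos(pi/(4*y^2)) + 2*(x^4/(1-x^5)) + 4*(exp(-s*(y^2+9/4))/(1-x^3))
   + 2*(Gs*exp(-4*b)/(1-exp(-b)))"
proof -
  have "exp (- s * (1/4 + y^2)) * sin (pi / (8 * y^2)) \<ge> 0" using sin_nonneg by simp
  thus ?thesis using g_decomp R0_approx R1_approx special1 cos_a2 by (simp add: abs_le_iff)
qed

lemma g_lower: "g \<alpha> y \<ge> 1 - 2*x*cos(pi/(4*y^2)) - 2*(x^4/(1-x^5))
   - 4*exp(-s*(1/4+y^2))* sin (pi / (8 * y^2)) - 4*(exp(-s*(y^2+9/4))/(1-x^3))
   - 2*(Gs*exp(-4*b)/(1-exp(-b)))"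
  using g_decomp R0_approx R1_approx special1 cos_a2 by (simp add: abs_le_iff)

end

lemma exp_pm_ge2: "exp u + exp (- u) \<ge> (2::real)"
proof -
  have "(exp u - 1)^2 \<ge> 0" by simp
  hence "exp u * exp u + 1 \<ge> 2 * exp u" by (simp add: power2_eq_square algebra_simps)
  hence "exp u + 1 / exp u \<ge> 2" by (simp add: field_simps)
  thus ?thesis by (simp add: exp_minus field_simps)
qed

lemma alt_bound:
  fixes s :: real assumes s: "s > 0" and q: "exp (- s) \<ge> 3/4"
  shows "summable (\<lambda>n. (-1)^(n+1) * exp (- s * real (n+1) ^ 2))"
        "1 + 2 * (\<Sum>n. (-1)^(n+1) * exp (- s * real (n+1) ^ 2)) \<le> 1/2"
proof -
  define q where "q = exp (- s)"
  define \<psi> where "\<psi> m = exp (- s * real m ^ 2)" for m :: nat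
  define f where "f n = (-1)^(n+1) * \<psi> (n+1)" for n
  have q0: "0 < q" and q1: "q < 1" using s by (auto simp: q_def)
  have q34: "q \<ge> 3/4" using q by (simp add: q_def)
  have psi_le: "\<psi> m \<le> q ^ m" for m unfolding \<psi>_def q_def by (rule exp_nat_sq_le) (use s in auto)
  have psi_pos: "\<psi> m > 0" for m unfolding \<psi>_def by simp
  have fb: "\<bar>f n\<bar> \<le> q * q ^ n" for n using psi_le[of "n+1"] psi_pos[of "n+1"] by (simp add: f_def abs_mult)
  have sf: "summable f" by (rule geo_bound(1)[OF fb]) (use q0 q1 in auto)
  have feq: "f = (\<lambda>n. (-1)^(n+1) * exp (- s * real (n+1) ^ 2))" by (simp add: fun_eq_iff f_def \<psi>_def)
  show "summable (\<lambda>n. (-1)^(n+1) * exp (- s * real (n+1) ^ 2))" using sf unfolding feq .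
  define A where "A = suminf f"
  have fA: "f sums A" using sf by (simp add: A_def summable_sums)
  define P where "P j = \<psi> (2*j+2) - \<psi> (2*j+1)" for j
  have PA: "P sums A"
  proof -
    have "(\<lambda>j. sum f {j * 2..<j * 2 + 2}) sums A" by (rule sums_group[OF fA]) simp
    moreover have "sum f {j * 2..<j * 2 + 2} = P j" for j
    proof -
      have "{j * 2..<j * 2 + 2} = {2*j, 2*j+1}" by auto
      thus ?thesis by (simp add: f_def P_def add.commute)
    qed
    ultimately show ?thesis by simp
  qed
  define h where "h j = \<psi> (2*j+1)" for j
  have h0: "h \<longlonglongrightarrow> 0"
  proof (rule Lim_null_comparison)
    show "\<forall>\<^sub>F j in sequentially. norm (h j) \<le> q ^ j"
    proof (rule always_eventually, rule allI)
      fix j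
      have "h j \<le> q ^ (2*j+1)" unfolding h_def by (rule psi_le)
      also have "\<dots> \<le> q ^ j" using q0 q1 by (intro power_decreasing) auto
      finally show "norm (h j) \<le> q ^ j" using psi_pos[of "2*j+1"] by (simp add: h_def)
    qed
    show "(\<lambda>j. q ^ j) \<longlonglongrightarrow> 0" using q0 q1 by (intro LIMSEQ_power_zero) auto
  qed
  have Tel: "(\<lambda>j. h (Suc j) - h j) sums (0 - h 0)" by (rule telescope_sums[OF h0])
  define D where "D j = 2 * P j - (h (Suc j) - h j)" for j
  have DS: "D sums (2 * A - (0 - h 0))" unfolding D_def by (intro sums_diff sums_mult PA Tel)
  have h00: "h 0 = q" by (simp add: h_def \<psi>_def q_def)
  have Db: "D j \<le> (2 * (1 - q) * q^4) * (q^4)^j" for j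
  proof -
    define m where "m = real (2*j+2)"
    have e1: "\<psi> (2*j+1) = q * \<psi> (2*j+2) * exp (2 * s * m)"
      unfolding \<psi>_def q_def m_def by (simp add: exp_add[symmetric] power2_eq_square algebra_simps)
    have e3: "\<psi> (2*j+3) = q * \<psi> (2*j+2) * exp (- (2 * s * m))"
      unfolding \<psi>_def q_def m_def by (simp add: exp_add[symmetric] power2_eq_square algebra_simps)
    have "h (Suc j) = \<psi> (2*j+3)" by (simp add: h_def numeral_3_eq_3)
    hence "D j = 2 * \<psi> (2*j+2) - q * \<psi> (2*j+2) * (exp (2 * s * m) + exp (- (2 * s * m)))"
      unfolding D_def P_def h_def using e1 e3 by (simp add: algebra_simps)
    also have "\<dots> \<le> 2 * \<psi> (2*j+2) - q * \<psi> (2*j+2) * 2"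
      using exp_pm_ge2[of "2 * s * m"] q0 psi_pos[of "2*j+2"]
      by (intro diff_left_mono mult_left_mono) auto
    also have "\<dots> = 2 * (1 - q) * \<psi> (2*j+2)" by (simp add: algebra_simps)
    also have "\<psi> (2*j+2) \<le> q^4 * (q^4)^j"
    proof -
      have "\<psi> (2*j+2) \<le> exp (- s * (real 4 + real 4 * real j))" unfolding \<psi>_def
        by (rule exp_mono_neg) (use s nat_le_sq[of j] in \<open>auto simp: power2_eq_square algebra_simps\<close>)
      also have "\<dots> = q^4 * (q^4)^j" unfolding q_def by (rule exp_lin_pow)
      finally show ?thesis .
    qed
    hence "2 * (1 - q) * \<psi> (2*j+2) \<le> 2 * (1 - q) * (q^4 * (q^4)^j)" using q1 by (intro mult_left_mono) auto
    finally show ?thesis by (simp add: mult.assoc)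
  qed
  have q4: "q^4 < 1" "0 \<le> q^4" using q0 q1 by (auto simp: power_less_one_iff)
  have GS: "(\<lambda>j. (2 * (1 - q) * q^4) * (q^4)^j) sums ((2 * (1 - q) * q^4) * (1 / (1 - q^4)))"
    by (rule sums_mult) (rule geometric_sums, use q4 in auto)
  have "2 * A + q \<le> (2 * (1 - q) * q^4) * (1 / (1 - q^4))"
    using sums_le[OF Db DS GS] h00 by simp
  hence main: "1 + 2 * A \<le> 1 - q + 2 * (1 - q) * q^4 / (1 - q^4)" by simp
  have fin: "1 - q + 2 * (1 - q) * q^4 / (1 - q^4) \<le> 1/2"
  proof -
    have qq: "q^3 \<ge> (3/4)^3" "q^2 \<ge> (3/4)^2" using q34 by (intro power_mono, simp_all)+
    have p: "2*q^3 + q^2 - 1 \<ge> 0" using qq by (simp add: power_divide)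
    have "(1 - q) * (2*q^3 + q^2 - 1) \<ge> 0" using p q1 by simp
    hence ineq: "2 * (1 + q^4) \<le> (1 + q) * (1 + q^2)" by (simp add: algebra_simps power2_eq_square power3_eq_cube power4_eq_xxxx)
    have q4p: "1 - q^4 > 0" using q4 by simp
    have "1 - q + 2 * (1 - q) * q^4 / (1 - q^4) - 1/2
        = ((1 - q) * (2 * (1 + q^4) - (1 + q) * (1 + q^2))) / (2 * (1 - q^4))"
      using q4p by (simp add: field_simps) (simp add: algebra_simps power2_eq_square power3_eq_cube power4_eq_xxxx)
    also have "\<dots> \<le> 0"
      using ineq q1 q4p by (intro divide_nonpos_pos mult_nonneg_nonpos) auto
    finally show ?thesis by simp
  qed
  show "1 + 2 * (\<Sum>n. (-1)^(n+1) * exp (- s * real (n+1) ^ 2)) \<le> 1/2"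
    using main fin unfolding A_def feq by simp
qed


lemma one_minus_cos_le: fixes v :: real assumes "v \<ge> 0" shows "1 - cos v \<le> v"
proof -
  have "cos v = cos (2 * (v/2))" by simp
  also have "\<dots> = 1 - 2 * sin (v/2) ^ 2" by (rule cos_double_sin)
  finally have e: "1 - cos v = 2 * sin (v/2) ^ 2" by simp
  have "sin (v/2) ^ 2 = \<bar>sin (v/2)\<bar> * \<bar>sin (v/2)\<bar>" by (simp add: power2_eq_square)
  also have "\<dots> \<le> \<bar>sin (v/2)\<bar> * 1" by (rule mult_left_mono) auto
  finally have "sin (v/2) ^ 2 \<le> \<bar>sin (v/2)\<bar>" by simp
  also have "\<dots> \<le> v/2" using abs_sin_x_le_abs_x[of "v/2"] assms by simp
  finally show ?thesis using e by simp
qed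

context setting begin

lemma cos_shift: "cos (2 * pi * real m * a2 y) \<le> (-1)^m + pi / (4 * y^2) * real m"
proof -
  define v where "v = pi / (4 * y^2) * real m"
  have v0: "v \<ge> 0" by (simp add: v_def)
  have "2 * pi * real m * a2 y = real m * pi - v" using y by (simp add: a2_def v_def field_simps)
  hence "cos (2 * pi * real m * a2 y) = (-1)^m * cos v" by (simp add: cos_diff)
  also have "\<dots> = (-1)^m - (-1)^m * (1 - cos v)" by (simp add: algebra_simps)
  also have "\<dots> \<le> (-1)^m + (1 - cos v)"
  proof -
    have "\<bar>(-1)^m * (1 - cos v)\<bar> = 1 - cos v" by (simp add: abs_mult)
    thus ?thesis by linarith
  qed
  also have "\<dots> \<le> (-1)^m + v" using one_minus_cos_le[OF v0] by simp
  finally show ?thesis by (simp add: v_def)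
qed

lemma lin_gauss_sum:
  "summable (\<lambda>n. real (n+1) * exp (- s * real (n+1) ^ 2))"
  "(\<Sum>n. real (n+1) * exp (- s * real (n+1) ^ 2)) \<le> 4 / s^2"
proof -
  define r where "r = exp (- s / 2)"
  have r0: "0 \<le> r" and r1: "r < 1" using s_pos by (auto simp: r_def)
  have b: "\<bar>real (n+1) * exp (- s * real (n+1) ^ 2)\<bar> \<le> (2/s * r) * r ^ n" for n
  proof -
    define m where "m = real (n+1)"
    have m1: "m \<ge> 1" by (simp add: m_def)
    have "exp (- s * m^2) \<le> exp (- s * m)"
      by (rule exp_mono_neg) (use s_pos m1 in \<open>auto simp: power2_eq_square\<close>)
    hence "m * exp (- s * m^2) \<le> m * exp (- s * m)" using m1 by simp
    also have "\<dots> = (m * exp (- (s * m / 2))) * exp (- (s * m / 2))"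
      by (simp add: mult.assoc exp_add[symmetric])
    also have "m * exp (- (s * m / 2)) \<le> 2 / s"
    proof -
      have "s * m / 2 < exp (s * m / 2)" by (rule exp_gt_self)
      hence "s * m / 2 * exp (- (s * m / 2)) \<le> 1" by (simp add: exp_minus field_simps)
      thus ?thesis using s_pos by (simp add: field_simps)
    qed
    hence "(m * exp (- (s * m / 2))) * exp (- (s * m / 2)) \<le> 2 / s * exp (- (s * m / 2))"
      by (rule mult_right_mono) simp
    also have "exp (- (s * m / 2)) = r ^ (n+1)"
      unfolding r_def m_def by (subst exp_of_nat_mult[symmetric]) (simp add: algebra_simps)
    finally show ?thesis using s_pos by (simp add: m_def abs_mult mult.assoc)
  qed
  note gb = geo_bound[OF b r0 r1]
  show "summable (\<lambda>n. real (n+1) * exp (- s * real (n+1) ^ 2))" using gb(1) .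
  have "(\<Sum>n. real (n+1) * exp (- s * real (n+1) ^ 2)) \<le> (2/s * r) / (1 - r)" using gb(3) .
  also have "\<dots> \<le> 4 / s^2"
  proof -
    have "1 + s/2 \<le> exp (s/2)" by (rule exp_ge_add_one_self)
    hence "r * (1 + s/2) \<le> 1" unfolding r_def by (simp add: exp_minus field_simps)
    hence "r \<le> 2 / s * (1 - r)" using s_pos by (simp add: field_simps)
    hence "r / (1 - r) \<le> 2 / s" using r1 by (simp add: pos_divide_le_eq)
    hence "2 / s * (r / (1 - r)) \<le> 2 / s * (2 / s)" using s_pos by (intro mult_left_mono) auto
    thus ?thesis by (simp add: power2_eq_square)
  qed
  finally show "(\<Sum>n. real (n+1) * exp (- s * real (n+1) ^ 2)) \<le> 4 / s^2" .
qed

lemma R0_large: assumes "s \<le> 1/4" shows "Rw \<alpha> y 0 \<le> 1/2 + 2 / (pi * \<alpha>^2)"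
proof -
  have q: "exp (- s) \<ge> 3/4"
  proof -
    have "1 + (- s) \<le> exp (- s)" by (rule exp_ge_add_one_self)
    thus ?thesis using assms by simp
  qed
  note ab = alt_bound[OF s_pos q]
  note lg = lin_gauss_sum
  define c where "c = pi / (4 * y^2)"
  have c0: "c \<ge> 0" by (simp add: c_def)
  have tb: "Tq \<alpha> y (int n + 1, 0) \<le> (-1)^(n+1) * exp (- s * real (n+1) ^ 2) + c * (real (n+1) * exp (- s * real (n+1) ^ 2))" for n
  proof -
    have "Tq \<alpha> y (int n + 1, 0) = exp (- s * real (n+1) ^ 2) * cos (2 * pi * real (n+1) * a2 y)"
      unfolding Tq0 by (simp add: add.commute)
    also have "\<dots> \<le> exp (- s * real (n+1) ^ 2) * ((-1)^(n+1) + c * real (n+1))"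
      unfolding c_def by (rule mult_left_mono[OF cos_shift]) simp
    finally show ?thesis by (simp add: algebra_simps)
  qed
  have s2: "summable (\<lambda>n. (-1)^(n+1) * exp (- s * real (n+1) ^ 2) + c * (real (n+1) * exp (- s * real (n+1) ^ 2)))"
    by (intro summable_add ab(1) summable_mult lg(1))
  have "(\<Sum>n. Tq \<alpha> y (int n + 1, 0)) \<le> (\<Sum>n. (-1)^(n+1) * exp (- s * real (n+1) ^ 2) + c * (real (n+1) * exp (- s * real (n+1) ^ 2)))"
    by (rule suminf_le[OF tb R0_split(2) s2])
  also have "\<dots> = (\<Sum>n. (-1)^(n+1) * exp (- s * real (n+1) ^ 2)) + (\<Sum>n. c * (real (n+1) * exp (- s * real (n+1) ^ 2)))"
    by (rule suminf_add[OF ab(1) summable_mult[OF lg(1)], symmetric])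
  also have "(\<Sum>n. c * (real (n+1) * exp (- s * real (n+1) ^ 2))) = c * (\<Sum>n. real (n+1) * exp (- s * real (n+1) ^ 2))"
    by (rule suminf_mult[OF lg(1)])
  finally have h: "(\<Sum>n. Tq \<alpha> y (int n + 1, 0)) \<le> (\<Sum>n. (-1)^(n+1) * exp (- s * real (n+1) ^ 2)) + c * (4 / s^2)"
    using mult_left_mono[OF lg(2) c0] by linarith
  have cs: "c * (4 / s^2) = 1 / (pi * \<alpha>^2)"
    using y al unfolding c_def s_def by (simp add: field_simps power2_eq_square)
  show ?thesis using R0_split(1) h ab(2) cs by simp
qed

end

lemma exp_n_bound:
  fixes x :: real assumes "x \<ge> 0" "n > 0"
  shows "(1 + x / real n + (x / real n)^2 / 2) ^ n \<le> exp x"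
proof -
  have "1 + x / real n + (x / real n)^2 / 2 \<le> exp (x / real n)"
    using exp_lower_Taylor_quadratic[of "x / real n"] assms by simp
  hence "(1 + x / real n + (x / real n)^2 / 2) ^ n \<le> exp (x / real n) ^ n"
    by (rule power_mono) (use assms in simp)
  also have "\<dots> = exp (real n * (x / real n))" by (rule exp_of_nat_mult[symmetric])
  also have "real n * (x / real n) = x" using assms by simp
  finally show ?thesis .
qed

lemma cos_ge_quad: fixes v :: real shows "cos v \<ge> 1 - v^2 / 2"
proof -
  have "cos v = cos (2 * (v/2))" by simp
  also have "\<dots> = 1 - 2 * sin (v/2) ^ 2" by (rule cos_double_sin)
  finally have e: "cos v = 1 - 2 * sin (v/2) ^ 2" .
  have "sin (v/2) ^ 2 \<le> (v/2)^2"
    using abs_sin_x_le_abs_x[of "v/2"] by (metis abs_ge_zero power2_abs power_mono)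
  thus ?thesis using e by (simp add: power_divide)
qed

lemma pi_b1: "3.1415 \<le> pi" using pi_approx(1) by simp
lemma pi_b2: "pi \<le> 3.1416" using pi_approx(2) by simp
lemmas pi_b = pi_b1 pi_b2

lemma sqrt3_b: "1.732 \<le> sqrt 3" "sqrt 3 \<le> 1.7321"
proof -
  show "1.732 \<le> sqrt 3" by (rule real_le_rsqrt) (simp add: power2_eq_square)
  have "sqrt 3 \<le> sqrt (1.7321^2)" by (rule real_sqrt_le_mono) (simp add: power2_eq_square)
  thus "sqrt 3 \<le> 1.7321" by simp
qed


context setting begin

lemma sy: "s * y = pi * \<alpha>" using y by (simp add: s_def)

lemma y_ge: "y \<ge> 0.866"
proof (rule power2_le_imp_le)
  show "0.866^2 \<le> y^2" using y by (simp add: power2_eq_square)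
qed (use y in simp)

lemma t_ge: assumes "\<alpha> \<ge> 3/2" shows "pi * \<alpha> \<ge> 4.71"
proof -
  have "3.1415 * 1.5 \<le> pi * \<alpha>" using pi_b assms by (intro mult_mono) auto
  thus ?thesis by simp
qed

lemma b_ge: "b \<ge> 3/4 * (pi * \<alpha>)"
proof -
  have "y * (y - 0.75) \<ge> 0.866 * 0.116" using y_ge by (intro mult_mono) auto
  hence "y^2 - 1/12 \<ge> 3/4 * y" by (simp add: power2_eq_square algebra_simps)
  hence "s * (y^2 - 1/12) \<ge> s * (3/4 * y)" using s_pos by (intro mult_left_mono) auto
  moreover have "b = s * (y^2 - 1/12)" by (simp add: b_def s_def)
  ultimately show ?thesis using sy by (simp add: algebra_simps)
qed

lemma a_eq: "a = s / 4" by (simp add: a_def s_def)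

lemma Err_bound: assumes "\<alpha> \<ge> 3/2" "s \<ge> 1/4"
  shows "4 * (exp (- s * (y^2 + 9/4)) / (1 - x^3)) + 2 * (Gs * exp (- 4 * b) / (1 - exp (- b)))
         \<le> 140 * exp (- 3 * (pi * \<alpha>))"
proof -
  define t where "t = pi * \<alpha>"
  have t: "t \<ge> 47/10" using t_ge[OF assms(1)] by (simp add: t_def)
  have E: "exp (- s * (y^2 + 9/4)) \<le> exp (- 3 * t)"
  proof -
    have "s * (y^2 + 9/4) - 3 * (s * y) = s * (y - 3/2)^2" by (simp add: power2_eq_square algebra_simps)
    moreover have "s * (y - 3/2)^2 \<ge> 0" using s_pos by simp
    ultimately have "s * (y^2 + 9/4) \<ge> 3 * t" using sy by (simp add: t_def)
    thus ?thesis by simp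
  qed
  have x3: "x^3 \<le> 1/2"
  proof -
    have "x^3 = exp (3 * (- s))" unfolding x_def by (subst exp_of_nat_mult[symmetric, where n=3]) simp
    also have "\<dots> \<le> exp (- (3/4))" using assms by simp
    also have "\<dots> \<le> 1/2"
    proof -
      have "1 + 3/4 + (3/4)^2/2 \<le> exp (3/4::real)" by (rule exp_lower_Taylor_quadratic) simp
      hence "2 \<le> exp (3/4::real)" by (simp add: power2_eq_square)
      thus ?thesis by (simp add: exp_minus field_simps)
    qed
    finally show ?thesis .
  qed
  have T1: "4 * (exp (- s * (y^2 + 9/4)) / (1 - x^3)) \<le> 8 * exp (- 3 * t)"
  proof -
    have "exp (- s * (y^2 + 9/4)) / (1 - x^3) \<le> exp (- 3 * t) / (1/2)"
      using E x3 by (intro frac_le) auto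
    thus ?thesis by simp
  qed
  have G: "Gs \<le> 33"
  proof -
    have a: "a \<ge> 1/16" using assms by (simp add: a_eq)
    have "Gs \<le> (2 + a) / a" by (rule Gs_bound)
    also have "\<dots> = 2 / a + 1" using a_pos by (simp add: field_simps)
    also have "2 / a \<le> 2 / (1/16)" using a by (intro divide_left_mono) auto
    finally show ?thesis by simp
  qed
  have bb: "b \<ge> 3/4 * t" using b_ge by (simp add: t_def)
  have eb: "exp (- b) \<le> 1/2"
  proof -
    have "1 + b \<le> exp b" by (rule exp_ge_add_one_self)
    hence "2 \<le> exp b" using bb t by linarith
    thus ?thesis by (simp add: exp_minus field_simps)
  qed
  have e4: "exp (- 4 * b) \<le> exp (- 3 * t)" using bb by simp
  have T2: "2 * (Gs * exp (- 4 * b) / (1 - exp (- b))) \<le> 132 * exp (- 3 * t)"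
  proof -
    have "Gs * exp (- 4 * b) \<le> 33 * exp (- 3 * t)" using G e4 Gs_nonneg by (intro mult_mono) auto
    hence "Gs * exp (- 4 * b) / (1 - exp (- b)) \<le> (33 * exp (- 3 * t)) / (1/2)"
      using eb Gs_nonneg by (intro frac_le) auto
    thus ?thesis by simp
  qed
  show ?thesis using T1 T2 by (simp add: t_def)
qed

end

lemma near_core:
  fixes \<alpha> y :: real
  assumes al: "\<alpha> \<ge> 3/2" and yy: "y \<ge> sqrt 3 / 2 + 1 / (4 * sqrt \<alpha>)"
    and xs: "exp (- (pi * \<alpha> / y)) \<le> 1/5"
  shows "2 * exp (- (pi * \<alpha> / y)) * cos (pi / (4 * y^2)) - 2 * (exp (- (pi * \<alpha> / y))^4 / (1 - exp (- (pi * \<alpha> / y))^5))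
         \<ge> 3.5 * exp (- (pi * \<alpha> / (sqrt 3 / 2)))"
proof -
  define t where "t = pi * \<alpha>"
  define sa where "sa = sqrt \<alpha>"
  define y0 where "y0 = sqrt 3 / 2"
  define y1 where "y1 = y0 + 1 / (4 * sa)"
  define x where "x = exp (- (t / y))"
  define x1 where "x1 = exp (- (t / y1))"
  define w where "w = exp (- (t / y0))"
  define c where "c = cos (pi / (4 * y^2))"
  define c1 where "c1 = cos (pi / (4 * y1^2))"
  have sa0: "sa > 0" using al by (simp add: sa_def)
  have sa2: "sa^2 = \<alpha>" using al by (simp add: sa_def)
  have sa_lo: "sa \<ge> 1.2247"
    unfolding sa_def by (rule real_le_rsqrt) (use al in \<open>simp add: power2_eq_square\<close>)
  have y0b: "0.866 \<le> y0" "y0 \<le> 0.86605" using sqrt3_b by (simp_all add: y0_def)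
  have y1_ge: "y1 \<ge> y0" using sa0 by (simp add: y1_def)
  have y1_le: "y1 \<le> 1.0702"
  proof -
    have "1 / (4 * sa) \<le> 1 / (4 * 1.2247)" using sa_lo by (intro divide_left_mono) auto
    thus ?thesis using y0b unfolding y1_def by simp
  qed
  have y0p: "y0 > 0" using y0b by simp
  have y1p: "y1 > 0" using y1_ge y0p by simp
  have yge: "y \<ge> y1" using yy by (simp add: y1_def y0_def sa_def)
  have yp: "y > 0" using yge y1p by simp
  have t0: "t > 0" using al by (simp add: t_def)
  have xx1: "x \<ge> x1"
  proof -
    have "t / y \<le> t / y1" using yge y1p t0 by (intro divide_left_mono) auto
    thus ?thesis by (simp add: x_def x1_def)
  qed
  have x0: "x > 0" by (simp add: x_def)
  have x5: "x \<le> 1/5" using xs by (simp add: x_def t_def)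
  have cc1: "c \<ge> c1"
  proof -
    have y1sq: "y1^2 \<ge> 3/4"
    proof -
      have "y1^2 \<ge> y0^2" using y1_ge y0p by (intro power_mono) auto
      moreover have "y0^2 = 3/4" by (simp add: y0_def power_divide)
      ultimately show ?thesis by simp
    qed
    have ysq: "y^2 \<ge> y1^2" using yge y1p by (intro power_mono) auto
    have A: "pi / (4 * y^2) \<le> pi / (4 * y1^2)" using ysq y1sq yp y1p by (intro divide_left_mono) auto
    have B: "pi / (4 * y1^2) \<le> pi" using y1sq by (simp add: divide_le_eq)
    show ?thesis unfolding c_def c1_def
      by (subst cos_mono_le_eq) (use A B in auto)
  qed
  have xt: "2 * (x^4 / (1 - x^5)) \<le> 0.02 * x"
  proof -
    have x3: "x^3 \<le> (1/5)^3" using x5 x0 by (intro power_mono) auto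
    have x55: "x^5 \<le> (1/5)^5" using x5 x0 by (intro power_mono) auto
    have x43: "x^4 = x * x^3" by (simp add: power4_eq_xxxx power3_eq_cube)
    have "2 * (x^4 / (1 - x^5)) = x * (2 * x^3 / (1 - x^5))" unfolding x43 by simp
    also have "2 * x^3 / (1 - x^5) \<le> 2 * (1/5)^3 / (1 - (1/5)^5)"
      using x3 x55 x0 by (intro frac_le) (auto simp: power_divide)
    also have "\<dots> \<le> 0.02" by (simp add: power_divide)
    finally show ?thesis using x0 by (simp add: mult_left_mono)
  qed
  have Deq: "t / y0 - t / y1 = pi * sa / (4 * y0 * y1)"
  proof -
    have d1: "t/y0 - t/y1 = t*(y1-y0)/(y0*y1)" using y0p y1p by (simp add: field_simps)
    have d2: "y1 - y0 = 1/(4 * sa)" by (simp add: y1_def)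
    have d3: "t = pi * sa * sa" by (simp add: t_def sa2[symmetric] power2_eq_square)
    have "t/y0 - t/y1 = t * (1/(4 * sa)) / (y0*y1)" unfolding d1 d2 ..
    also have "\<dots> = (pi * sa * sa) * (1/(4 * sa)) / (y0*y1)" unfolding d3 ..
    also have "\<dots> = pi * sa / (4 * y0 * y1)" using sa0 y0p y1p by (simp add: field_simps)
    finally show ?thesis .
  qed
  have x1w: "x1 = w * exp (t / y0 - t / y1)"
    by (simp add: x1_def w_def exp_add[symmetric])
  have key: "exp (t / y0 - t / y1) * (2 * c1 - 0.02) \<ge> 3.5"
  proof (cases "\<alpha> \<ge> 3.5")
    case True
    have sa_hi: "sa \<ge> 1.87" unfolding sa_def by (rule real_le_rsqrt) (use True in \<open>simp add: power2_eq_square\<close>)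
    have den: "4 * y0 * y1 \<le> 4 * 0.86605 * 1.0702" using y0b y1_le y0p y1p by (intro mult_mono) auto
    have "pi * sa / (4 * y0 * y1) \<ge> (3.1415 * 1.87) / (4 * 0.86605 * 1.0702)"
    proof (rule frac_le)
      show "3.1415 * 1.87 \<le> pi * sa" using pi_b sa_hi by (intro mult_mono) auto
    qed (use den y0p y1p sa0 in auto)
    hence D: "t / y0 - t / y1 \<ge> 1.58" unfolding Deq by simp
    have "exp (t / y0 - t / y1) \<ge> exp 1.58" using D by simp
    moreover have "exp (1.58::real) \<ge> 4.4"
      using exp_n_bound[of "1.58" 2] by (simp add: power2_eq_square)
    ultimately have E: "exp (t / y0 - t / y1) \<ge> 4.4" by linarith
    have "c1 \<ge> 1/2"
    proof -
      have y1sq: "y1^2 \<ge> 3/4"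
      proof -
        have "y1^2 \<ge> y0^2" using y1_ge y0p by (intro power_mono) auto
        moreover have "y0^2 = 3/4" by (simp add: y0_def power_divide)
        ultimately show ?thesis by simp
      qed
      have A: "pi / (4 * y1^2) \<le> pi / 3" using y1sq by (intro divide_left_mono) auto
      have "cos (pi / 3) \<le> cos (pi / (4 * y1^2))"
        by (subst cos_mono_le_eq) (use A y1sq in \<open>auto simp: divide_le_eq\<close>)
      thus ?thesis by (simp add: c1_def cos_60)
    qed
    hence "2 * c1 - 0.02 \<ge> 0.98" by simp
    hence "exp (t / y0 - t / y1) * (2 * c1 - 0.02) \<ge> 4.4 * 0.98" using E by (intro mult_mono) auto
    thus ?thesis by simp
  next
    case False
    have sa_hi: "sa \<le> 1.871"
    proof -
      have "sa \<le> sqrt (1.871^2)" unfolding sa_def by (rule real_sqrt_le_mono) (use False in \<open>simp add: power2_eq_square\<close>)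
      thus ?thesis by simp
    qed
    have y1_lo: "y1 \<ge> 0.9996"
    proof -
      have "1 / (4 * 1.871) \<le> 1 / (4 * sa)" using sa_hi sa0 by (intro divide_left_mono) auto
      thus ?thesis using y0b unfolding y1_def by simp
    qed
    have den: "4 * y0 * y1 \<le> 4 * 0.86605 * 1.0702" using y0b y1_le y0p y1p by (intro mult_mono) auto
    have "pi * sa / (4 * y0 * y1) \<ge> (3.1415 * 1.2247) / (4 * 0.86605 * 1.0702)"
    proof (rule frac_le)
      show "3.1415 * 1.2247 \<le> pi * sa" using pi_b sa_lo by (intro mult_mono) auto
    qed (use den y0p y1p sa0 in auto)
    hence D: "t / y0 - t / y1 \<ge> 1.0375" unfolding Deq by simp
    have "exp (t / y0 - t / y1) \<ge> exp 1.0375" using D by simp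
    moreover have "exp (1.0375::real) \<ge> 2.73"
      using exp_n_bound[of "1.0375" 2] by (simp add: power2_eq_square)
    ultimately have E: "exp (t / y0 - t / y1) \<ge> 2.73" by linarith
    have th: "pi / (4 * y1^2) \<le> 0.7861"
    proof -
      have "y1^2 \<ge> 0.9996^2" using y1_lo by (intro power_mono) auto
      hence h: "pi / (4 * y1^2) \<le> 3.1416 / (4 * 0.9996^2)" using pi_b by (intro frac_le) auto
      have n: "3.1416 / (4 * 0.9996^2) \<le> (0.7861::real)" by (simp add: divide_le_eq power2_eq_square)
      show ?thesis by (rule order_trans[OF h n])
    qed
    have "c1 \<ge> 1 - (pi / (4 * y1^2))^2 / 2" unfolding c1_def by (rule cos_ge_quad)
    moreover have "(pi / (4 * y1^2))^2 \<le> 0.7861^2" using th by (intro power_mono) auto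
    ultimately have "c1 \<ge> 0.691" by (simp add: power2_eq_square)
    hence "2 * c1 - 0.02 \<ge> 1.362" by simp
    hence "exp (t / y0 - t / y1) * (2 * c1 - 0.02) \<ge> 2.73 * 1.362" using E by (intro mult_mono) auto
    thus ?thesis by simp
  qed
  have "0 < exp (t / y0 - t / y1) * (2 * c1 - 0.02)" using key by linarith
  hence c1pos: "2 * c1 - 0.02 \<ge> 0" by (simp add: zero_less_mult_iff)
  have "2 * x * c - 2 * (x^4 / (1 - x^5)) \<ge> x * (2 * c - 0.02)" using xt by (simp add: algebra_simps)
  also have "x * (2 * c - 0.02) \<ge> x1 * (2 * c1 - 0.02)" using xx1 cc1 c1pos x0 by (intro mult_mono) auto
  also have "x1 * (2 * c1 - 0.02) = w * (exp (t / y0 - t / y1) * (2 * c1 - 0.02))" by (simp add: x1w)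
  also have "\<dots> \<ge> w * 3.5" using key by (intro mult_left_mono) (auto simp: w_def)
  finally show ?thesis by (simp add: x_def w_def c_def t_def y0_def mult.commute)
qed


lemma exp_num: fixes x c :: real
  assumes "x \<ge> 0" "n > 0" "c \<le> (1 + x / real n + (x / real n)^2 / 2) ^ n"
  shows "c \<le> exp x"
  using exp_n_bound[OF assms(1,2)] assms(3) by linarith

lemma w_small:
  fixes \<alpha> :: real assumes al: "\<alpha> \<ge> 3/2"
  shows "exp (- (pi * \<alpha> / (sqrt 3 / 2))) \<le> 1/100"
        "280 * exp (- 3 * (pi * \<alpha>)) \<le> exp (- (pi * \<alpha> / (sqrt 3 / 2))) / 4"
proof -
  define t where "t = pi * \<alpha>"
  have t: "t \<ge> 4.71"
  proof -
    have "3.1415 * 1.5 \<le> pi * \<alpha>" using pi_b al by (intro mult_mono) auto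
    thus ?thesis by (simp add: t_def)
  qed
  have s3: "1.732 \<le> sqrt 3" "sqrt 3 \<le> 1.7321" by (rule sqrt3_b)+
  have e: "t / (sqrt 3 / 2) = 2 * t / sqrt 3" by simp
  have lo: "2 * t / sqrt 3 \<ge> 5.43"
  proof -
    have "2 * 4.71 / 1.7321 \<le> 2 * t / sqrt 3" using t s3 by (intro frac_le) auto
    moreover have "(5.43::real) \<le> 2 * 4.71 / 1.7321" by (simp add: le_divide_eq)
    ultimately show ?thesis by linarith
  qed
  have "exp (5.43::real) \<ge> 100"
    by (rule exp_num[where n=4]) (simp_all add: power_divide)
  moreover have "exp (2 * t / sqrt 3) \<ge> exp 5.43" using lo by simp
  ultimately have "exp (2 * t / sqrt 3) \<ge> 100" by linarith
  thus "exp (- (pi * \<alpha> / (sqrt 3 / 2))) \<le> 1/100"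
    unfolding t_def[symmetric] e by (simp add: exp_minus field_simps)
  have hi: "2 * t / sqrt 3 \<le> 1.1548 * t"
  proof -
    have "2 * t / sqrt 3 \<le> 2 * t / 1.732" using t s3 by (intro divide_left_mono) auto
    also have "\<dots> \<le> 1.1548 * t" using t by (simp add: divide_le_eq)
    finally show ?thesis .
  qed
  have t': "t \<ge> 471/100" using t by simp
  have hi': "2 * t / sqrt 3 \<le> 11548/10000 * t" using hi by simp
  have "3 * t - 2 * t / sqrt 3 \<ge> 869/100" using hi' t' by linarith
  hence "3 * t - 2 * t / sqrt 3 \<ge> 8.69" by simp
  hence "exp (3 * t - 2 * t / sqrt 3) \<ge> exp 8.69" by simp
  moreover have "exp (8.69::real) \<ge> 1120"
    by (rule exp_num[where n=8]) (simp_all add: power_divide)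
  ultimately have big: "exp (3 * t - 2 * t / sqrt 3) \<ge> 1120" by linarith
  have "exp (- (2 * t / sqrt 3)) = exp (3 * t - 2 * t / sqrt 3) * exp (- 3 * t)"
    by (simp add: exp_add[symmetric])
  hence "exp (- (2 * t / sqrt 3)) \<ge> 1120 * exp (- 3 * t)" using big by simp
  thus "280 * exp (- 3 * (pi * \<alpha>)) \<le> exp (- (pi * \<alpha> / (sqrt 3 / 2))) / 4"
    unfolding t_def[symmetric] e by simp
qed

lemma far_core:
  fixes \<alpha> y :: real
  assumes al: "\<alpha> \<ge> 3/2" and yp: "y > 0" and s4: "pi * \<alpha> / y \<ge> 1/4"
    and xs: "exp (- (pi * \<alpha> / y)) \<ge> 1/5"
  shows "2 * exp (- (pi * \<alpha> / y)) * cos (pi / (4 * y^2)) - 2 * (exp (- (pi * \<alpha> / y))^4 / (1 - exp (- (pi * \<alpha> / y))^5))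
         \<ge> 0.035"
proof -
  define t where "t = pi * \<alpha>"
  define s where "s = t / y"
  define x where "x = exp (- s)"
  define c where "c = cos (pi / (4 * y^2))"
  have t: "t \<ge> 4.71"
  proof -
    have "3.1415 * 1.5 \<le> pi * \<alpha>" using pi_b al by (intro mult_mono) auto
    thus ?thesis by (simp add: t_def)
  qed
  have s4': "s \<ge> 1/4" using s4 by (simp add: s_def t_def)
  have x5: "x \<ge> 1/5" using xs by (simp add: x_def s_def t_def)
  have x0: "x > 0" by (simp add: x_def)
  have s2: "s \<le> 2"
  proof (rule ccontr)
    assume "\<not> s \<le> 2"
    hence "s > 2" by simp
    have "1 + s + s^2/2 \<le> exp s" using s4' by (intro exp_lower_Taylor_quadratic) simp
    moreover have "s^2 > 2^2" using \<open>s > 2\<close> by (intro power_strict_mono) auto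
    ultimately have "exp s > 5" using \<open>s > 2\<close> by simp
    hence "x < 1/5" by (simp add: x_def exp_minus field_simps)
    thus False using x5 by simp
  qed
  have ybig: "y \<ge> 2.355"
  proof -
    have "y = t / s" using yp s4' by (simp add: s_def)
    also have "\<dots> \<ge> 4.71 / 2" using t s2 s4' by (intro frac_le) auto
    finally show ?thesis by simp
  qed
  have th: "pi / (4 * y^2) \<le> 0.1417"
  proof -
    have "y^2 \<ge> 2.355^2" using ybig by (intro power_mono) auto
    hence h: "pi / (4 * y^2) \<le> 3.1416 / (4 * 2.355^2)" using pi_b by (intro frac_le) auto
    have n: "3.1416 / (4 * 2.355^2) \<le> (0.1417::real)" by (simp add: divide_le_eq power2_eq_square)
    show ?thesis by (rule order_trans[OF h n])
  qed
  have "c \<ge> 1 - (pi / (4 * y^2))^2 / 2" unfolding c_def by (rule cos_ge_quad)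
  moreover have "(pi / (4 * y^2))^2 \<le> 0.1417^2" using th by (intro power_mono) auto
  ultimately have c: "c \<ge> 0.985" by (simp add: power2_eq_square)
  have x3: "x^3 \<le> 0.4924"
  proof -
    have "x^3 = exp (3 * (- s))" unfolding x_def by (subst exp_of_nat_mult[symmetric, where n=3]) simp
    also have "\<dots> \<le> exp (- (3/4))" using s4' by simp
    also have "\<dots> \<le> 0.4924"
    proof -
      have "1 + 3/4 + (3/4)^2/2 \<le> exp (3/4::real)" by (rule exp_lower_Taylor_quadratic) simp
      hence "2.03125 \<le> exp (3/4::real)" by (simp add: power2_eq_square)
      thus ?thesis by (simp add: exp_minus field_simps)
    qed
    finally show ?thesis .
  qed
  have x55: "x^5 \<le> 0.33"
  proof -
    have "x^5 = exp (5 * (- s))" unfolding x_def by (subst exp_of_nat_mult[symmetric, where n=5]) simp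
    also have "\<dots> \<le> exp (- (5/4))" using s4' by simp
    also have "\<dots> \<le> 0.33"
    proof -
      have "1 + 5/4 + (5/4)^2/2 \<le> exp (5/4::real)" by (rule exp_lower_Taylor_quadratic) simp
      hence "3.03125 \<le> exp (5/4::real)" by (simp add: power2_eq_square)
      thus ?thesis by (simp add: exp_minus field_simps)
    qed
    finally show ?thesis .
  qed
  have x43: "x^4 = x * x^3" by (simp add: power4_eq_xxxx power3_eq_cube)
  have "2 * (x^4 / (1 - x^5)) = x * (2 * x^3 / (1 - x^5))" unfolding x43 by simp
  also have "2 * x^3 / (1 - x^5) \<le> 2 * 0.4924 / (1 - 0.33)"
    using x3 x55 x0 by (intro frac_le) auto
  also have "2 * 0.4924 / (1 - 0.33) \<le> (1.47::real)" by (simp add: divide_le_eq)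
  finally have xt: "2 * (x^4 / (1 - x^5)) \<le> x * 1.47" using x0 by (simp add: mult_left_mono)
  have "2 * x * c - 2 * (x^4 / (1 - x^5)) \<ge> x * (2 * c - 1.47)" using xt by (simp add: algebra_simps)
  also have "x * (2 * c - 1.47) \<ge> (1/5) * 0.5" using x5 c by (intro mult_mono) auto
  finally show ?thesis by (simp add: x_def s_def t_def c_def)
qed


context setting begin

lemma large_case: assumes al: "\<alpha> \<ge> 3/2" and s4: "s \<le> 1/4"
  shows "g \<alpha> y \<le> 0.8"
proof -
  define t where "t = pi * \<alpha>"
  define u where "u = t * y"
  have t: "t \<ge> 4.71" using t_ge[OF al] by (simp add: t_def)
  have t0: "t > 0" using t by simp
  have st: "s = t / y" by (simp add: s_def t_def)
  have yt: "y \<ge> 4 * t" using s4 y unfolding st by (simp add: divide_le_eq)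
  have u: "u \<ge> 88"
  proof -
    have "u \<ge> t * (4 * t)" unfolding u_def using yt t0 by (intro mult_left_mono) auto
    moreover have "t * (4 * t) \<ge> 4.71 * (4 * 4.71)" using t by (intro mult_mono) auto
    ultimately show ?thesis by simp
  qed
  have u0: "u > 0" using u by simp
  have G: "Gs \<le> u"
  proof -
    have "Gs \<le> (2 + a) / a" by (rule Gs_bound)
    also have "\<dots> = 1 + 8 * y / t" using a_pos y t0 unfolding a_eq st by (simp add: field_simps)
    also have "8 * y / t = 8 * u / t^2" using t0 by (simp add: u_def power2_eq_square)
    also have "8 * u / t^2 \<le> 8 * u / 16"
    proof -
      have "t^2 \<ge> 4.71^2" using t by (intro power_mono) auto
      hence "t^2 \<ge> 16" by (simp add: power2_eq_square)
      thus ?thesis using u0 by (intro divide_left_mono) auto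
    qed
    finally show ?thesis using u by simp
  qed
  have bb: "b \<ge> 3/4 * u"
  proof -
    have "y^2 \<ge> 3/4" using y by simp
    hence "y^2 - 1/12 \<ge> 3/4 * y^2" by simp
    hence "s * (y^2 - 1/12) \<ge> s * (3/4 * y^2)" using s_pos by (intro mult_left_mono) auto
    moreover have "b = s * (y^2 - 1/12)" by (simp add: b_def s_def)
    moreover have "s * (3/4 * y^2) = 3/4 * u" unfolding u_def st using y by (simp add: power2_eq_square)
    ultimately show ?thesis by simp
  qed
  have ebig: "exp b \<ge> (3/4 * u)^4 / 64"
  proof -
    define v where "v = 3/4 * u"
    have v0: "v \<ge> 0" using u by (simp add: v_def)
    have "(1 + v / real 2 + (v / real 2)^2 / 2)^2 \<le> exp v" using exp_n_bound[OF v0, of 2] by simp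
    moreover have "(v^2 / 8)^2 \<le> (1 + v / real 2 + (v / real 2)^2 / 2)^2"
      using v0 by (intro power_mono) (auto simp: power2_eq_square)
    moreover have "exp v \<le> exp b" using bb by (simp add: v_def)
    ultimately have "(v^2/8)^2 \<le> exp b" by linarith
    thus ?thesis by (simp add: v_def power2_eq_square power4_eq_xxxx)
  qed
  have GE: "Gs * exp (- b) \<le> 0.001"
  proof -
    have pos: "(3/4 * u)^4 / 64 > 0" using u0 by simp
    have "Gs * exp (- b) = Gs / exp b" by (simp add: exp_minus field_simps)
    also have "\<dots> \<le> u / ((3/4 * u)^4 / 64)" using G ebig pos Gs_nonneg by (intro frac_le) auto
    also have "\<dots> = 16384 / (81 * u^3)" using u0 by (simp add: field_simps power4_eq_xxxx power3_eq_cube)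
    also have "\<dots> \<le> 16384 / (81 * 88^3)"
    proof -
      have "u^3 \<ge> 88^3" using u by (intro power_mono) auto
      thus ?thesis using u0 by (intro divide_left_mono) auto
    qed
    also have "\<dots> \<le> 0.001" by simp
    finally show ?thesis .
  qed
  have eb: "exp (- b) \<le> 1/2"
  proof -
    have "1 + b \<le> exp b" by (rule exp_ge_add_one_self)
    hence "2 \<le> exp b" using bb u by linarith
    thus ?thesis by (simp add: exp_minus field_simps)
  qed
  have e4: "exp (- 4 * b) \<le> exp (- b)" using b_pos by simp
  have S: "\<bar>\<Sum>n. Rw \<alpha> y (int n + 2)\<bar> \<le> 2 * (Gs * exp (- b))"
  proof -
    have "\<bar>\<Sum>n. Rw \<alpha> y (int n + 2)\<bar> \<le> Gs * exp (- 4 * b) / (1 - exp (- b))" by (rule g_decomp(2))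
    also have "\<dots> \<le> (Gs * exp (- b)) / (1/2)" using eb e4 Gs_nonneg by (intro frac_le mult_left_mono) auto
    finally show ?thesis by simp
  qed
  have R1: "\<bar>Rw \<alpha> y 1\<bar> \<le> Gs * exp (- b)" using row_bound[of 1] by simp
  have R0: "Rw \<alpha> y 0 \<le> 1/2 + 2 / (pi * \<alpha>^2)" by (rule R0_large[OF s4])
  have P: "2 / (pi * \<alpha>^2) \<le> 0.2831"
  proof -
    have "\<alpha>^2 \<ge> 1.5^2" using al by (intro power_mono) auto
    hence "pi * \<alpha>^2 \<ge> 3.1415 * 1.5^2" using pi_b by (intro mult_mono) auto
    hence "2 / (pi * \<alpha>^2) \<le> 2 / (3.1415 * 1.5^2)" using al by (intro divide_left_mono) auto
    also have "\<dots> \<le> 0.2831" by (simp add: divide_le_eq power2_eq_square)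
    finally show ?thesis .
  qed
  show ?thesis using g_decomp(1) R0 R1 S GE P by (simp add: abs_le_iff)
qed

end

lemma main_ineq:
  fixes \<alpha> y :: real
  assumes al: "\<alpha> \<ge> 3/2" and yy: "y \<ge> sqrt 3 / 2 + 1 / (4 * sqrt \<alpha>)"
  shows "g \<alpha> y \<le> g \<alpha> (sqrt 3 / 2)"
proof -
  have a0: "\<alpha> > 0" using al by simp
  have y0p: "sqrt 3 / 2 > 0" by simp
  have y0sq: "(sqrt 3 / 2)^2 = 3/4" by (simp add: power_divide)
  have yge0: "y \<ge> sqrt 3 / 2" using yy a0 by (smt (verit) divide_nonneg_nonneg real_sqrt_ge_zero zero_le_mult_iff zero_le_numeral)
  have yp: "y > 0" using yge0 y0p by linarith
  have ysq: "y^2 \<ge> 3/4"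
  proof -
    have "y^2 \<ge> (sqrt 3 / 2)^2" using yge0 y0p by (intro power_mono) auto
    thus ?thesis using y0sq by simp
  qed
  interpret Z: setting \<alpha> "sqrt 3 / 2" by unfold_locales (use a0 y0sq in auto)
  interpret Y: setting \<alpha> y by unfold_locales (use a0 yp ysq in auto)
  define w where "w = exp (- (pi * \<alpha> / (sqrt 3 / 2)))"
  have w1: "w \<le> 1/100" and w2: "280 * exp (- 3 * (pi * \<alpha>)) \<le> w / 4"
    using w_small[OF al] by (simp_all add: w_def)
  have w0: "w > 0" by (simp add: w_def)
  have Zx: "Z.x = w" by (simp add: Z.x_def Z.s_def w_def)
  have Zs: "Z.s \<ge> 1/4"
  proof -
    have "pi * \<alpha> \<ge> 4.71" by (rule Y.t_ge[OF al])
    moreover have "sqrt 3 / 2 \<le> 1" using sqrt3_b by simp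
    ultimately have "Z.s \<ge> 4.71 / 1" unfolding Z.s_def by (intro frac_le) auto
    thus ?thesis by simp
  qed
  have ZE: "exp (- Z.s * (1/4 + (sqrt 3 / 2)^2)) = w" using Zx unfolding y0sq Z.x_def by simp
  note low0 = Z.g_lower
  note errZ = Z.Err_bound[OF al Zs]
  have wt: "2 * (w^4 / (1 - w^5)) \<le> w / 4"
  proof -
    have w3: "w^3 \<le> (1/100)^3" using w1 w0 by (intro power_mono) auto
    have w5: "w^5 \<le> 1/2"
    proof -
      have "w^5 \<le> (1/100)^5" using w1 w0 by (intro power_mono) auto
      thus ?thesis by (simp add: power_divide)
    qed
    have w43: "w^4 = w * w^3" by (simp add: power4_eq_xxxx power3_eq_cube)
    have "w^4 / (1 - w^5) \<le> (w * (1/100)^3) / (1/2)"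
      unfolding w43 using w3 w5 w0 by (intro frac_le mult_left_mono) auto
    hence "w^4 / (1 - w^5) \<le> w / 500000" by (simp add: power_divide)
    thus ?thesis using w0 by linarith
  qed
  have lowg: "g \<alpha> (sqrt 3 / 2) \<ge> 1 - 3 * w - w / 4 - w / 8"
  proof -
    have c: "cos (pi / (4 * (sqrt 3 / 2)^2)) = 1/2" unfolding y0sq by (simp add: cos_60)
    have sn: "sin (pi / (8 * (sqrt 3 / 2)^2)) = 1/2" unfolding y0sq by (simp add: sin_30)
    show ?thesis using low0 errZ w2 wt unfolding c sn ZE Zx by simp
  qed
  show ?thesis
  proof (cases "Y.s \<le> 1/4")
    case True
    have "g \<alpha> y \<le> 0.8" by (rule Y.large_case[OF al True])
    thus ?thesis using lowg w1 by simp
  next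
    case False
    hence Ys: "Y.s \<ge> 1/4" by simp
    have Yx: "Y.x = exp (- (pi * \<alpha> / y))" by (simp add: Y.x_def Y.s_def)
    note up = Y.g_upper
    note errY = Y.Err_bound[OF al Ys]
    have M: "2 * Y.x * cos (pi / (4 * y^2)) - 2 * (Y.x^4 / (1 - Y.x^5)) \<ge> 3.5 * w"
    proof (cases "Y.x \<le> 1/5")
      case True
      show ?thesis using near_core[OF al yy True[unfolded Yx]] unfolding Yx w_def .
    next
      case False
      have "pi * \<alpha> / y \<ge> 1/4" using Ys by (simp add: Y.s_def)
      from far_core[OF al yp this] False have "2 * Y.x * cos (pi / (4 * y^2)) - 2 * (Y.x^4 / (1 - Y.x^5)) \<ge> 0.035"
        unfolding Yx by simp
      thus ?thesis using w1 by simp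
    qed
    show ?thesis using up errY M lowg w2 by simp
  qed
qed


lemma Tq_cont: "continuous_on {y. y > 0} (\<lambda>y. Tq \<alpha> y x)"
  unfolding Tq_def a1_def a2_def by (cases x) (auto intro!: continuous_intros)

lemma g_cont:
  fixes \<alpha> Y1 :: real assumes a0: "\<alpha> > 0"
  shows "continuous_on {sqrt 3 / 2..Y1} (g \<alpha>)"
proof -
  define Y where "Y = {sqrt 3 / 2..Y1}"
  define M where "M = (\<lambda>(k::int,l::int). exp (- (pi * \<alpha> / (4 * Y1)) * real_of_int k ^ 2) * exp (- (3/4 * (pi * \<alpha>)) * real_of_int l ^ 2))"
  show ?thesis
  proof (cases "Y1 \<ge> sqrt 3 / 2")
    case False
    thus ?thesis by simp
  next
    case True
    have Y1p: "Y1 > 0" using True by (smt (verit) real_sqrt_gt_zero divide_pos_pos zero_less_numeral)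
    have Mb: "norm (Tq \<alpha> y x) \<le> M x" if "x \<in> UNIV" "y \<in> Y" for x y
    proof -
      have y0: "y \<ge> sqrt 3 / 2" "y \<le> Y1" using that by (auto simp: Y_def)
      have yp: "y > 0" using y0 by (smt (verit) real_sqrt_gt_zero divide_pos_pos zero_less_numeral)
      have ysq: "y^2 \<ge> 3/4"
      proof -
        have "y^2 \<ge> (sqrt 3 / 2)^2" using y0 by (intro power_mono) auto
        thus ?thesis by (simp add: power_divide)
      qed
      interpret S: setting \<alpha> y by unfold_locales (use a0 yp ysq in auto)
      obtain k l where x: "x = (k,l)" by (cases x)
      have A: "exp (- S.a * real_of_int k ^ 2) \<le> exp (- (pi * \<alpha> / (4 * Y1)) * real_of_int k ^ 2)"
      proof -
        have "pi * \<alpha> / (4 * Y1) \<le> S.a" unfolding S.a_def using y0 yp a0 by (intro divide_left_mono) auto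
        from mult_right_mono[OF this, of "real_of_int k ^ 2"] show ?thesis by simp
      qed
      have B: "exp (- S.b * real_of_int l ^ 2) \<le> exp (- (3/4 * (pi * \<alpha>)) * real_of_int l ^ 2)"
        using mult_right_mono[OF S.b_ge, of "real_of_int l ^ 2"] by simp
      have "norm (Tq \<alpha> y x) \<le> exp (- S.a * real_of_int k ^ 2) * exp (- S.b * real_of_int l ^ 2)"
        using S.major[of k l] by (simp add: x)
      also have "\<dots> \<le> M x" unfolding x M_def prod.case using A B by (intro mult_mono) auto
      finally show ?thesis .
    qed
    have Ms: "M summable_on UNIV" unfolding M_def
      by (rule product_summable[OF gauss_summable gauss_summable]) (use a0 Y1p in auto)
    have ul: "uniform_limit Y (\<lambda>X y. \<Sum>x\<in>X. Tq \<alpha> y x) (\<lambda>y. \<Sum>\<^sub>\<infinity>x\<in>UNIV. Tq \<alpha> y x) (finite_subsets_at_top UNIV)"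
      by (rule Weierstrass_m_test_general[OF Mb Ms])
    have c: "\<forall>\<^sub>F X in finite_subsets_at_top UNIV. continuous_on Y (\<lambda>y. \<Sum>x\<in>X. Tq \<alpha> y x)"
    proof (rule always_eventually, rule allI)
      fix X :: "(int \<times> int) set"
      have "Y \<subseteq> {y. y > 0}"
      proof
        fix z assume "z \<in> Y"
        hence "z \<ge> sqrt 3 / 2" by (simp add: Y_def)
        moreover have "sqrt 3 / 2 > 0" by simp
        ultimately have "z > 0" by linarith
        thus "z \<in> {y. y > 0}" by simp
      qed
      thus "continuous_on Y (\<lambda>y. \<Sum>x\<in>X. Tq \<alpha> y x)"
        by (intro continuous_on_sum) (auto intro: continuous_on_subset[OF Tq_cont])
    qed
    have "continuous_on Y (\<lambda>y. \<Sum>\<^sub>\<infinity>x\<in>UNIV. Tq \<alpha> y x)"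
      by (rule uniform_limit_theorem[OF c ul]) simp
    thus ?thesis unfolding Y_def by (simp add: g_Tq[abs_def])
  qed
qed

theorem mainTheorem18:
  fixes \<alpha> :: real
  assumes "\<alpha> \<ge> 1.5"
  shows "\<exists>y0. sqrt 3 / 2 \<le> y0 \<and> y0 \<le> sqrt 3 / 2 + 1 / (4 * sqrt \<alpha>) \<and>
             (\<forall>y. y \<ge> sqrt 3 / 2 \<longrightarrow> g \<alpha> y \<le> g \<alpha> y0)"
proof -
  have al: "\<alpha> \<ge> 3/2" using assms by simp
  have a0: "\<alpha> > 0" using al by simp
  define y1 where "y1 = sqrt 3 / 2 + 1 / (4 * sqrt \<alpha>)"
  have y01: "sqrt 3 / 2 \<le> y1" using a0 by (simp add: y1_def)
  obtain ys where ys: "ys \<in> {sqrt 3 / 2..y1}" and mx: "\<forall>z\<in>{sqrt 3 / 2..y1}. g \<alpha> z \<le> g \<alpha> ys"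
    using continuous_attains_sup[OF compact_Icc _ g_cont[OF a0, of y1]] y01 by auto
  show ?thesis
  proof (intro exI conjI allI impI)
    show "sqrt 3 / 2 \<le> ys" "ys \<le> sqrt 3 / 2 + 1 / (4 * sqrt \<alpha>)" using ys by (auto simp: y1_def)
    fix y assume y: "sqrt 3 / 2 \<le> y"
    show "g \<alpha> y \<le> g \<alpha> ys"
    proof (cases "y \<le> y1")
      case True thus ?thesis using mx y by auto
    next
      case False
      hence "g \<alpha> y \<le> g \<alpha> (sqrt 3 / 2)" using main_ineq[OF al] by (simp add: y1_def)
      also have "\<dots> \<le> g \<alpha> ys" using mx y01 by auto
      finally show ?thesis .
    qed
  qed
qed


end
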